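(* Let $k\ge 6$ and let $H$ be the complement of $P_k$ or of $C_k$. Then $\eta(H)=\lfloor (k+\omega(H))/2\rfloor$, where $\omega(H)$ is the size of a maximum clique of $H$. Explicitly, writing $k=4t+r$ with $r\in\{0,1,2,3\}$: $\eta(\bar C_k)=3t,3t,3t+1,3t+2$ and $\eta(\bar P_k)=3t,3t+1,3t+1,3t+2$ for $r=0,1,2,3$ respectively.
   Context: $\bar F$ is the complement of $F$; $P_k$, $C_k$ are the path and cycle on $k$ vertices. A $K_t$-minor function of $H$ is a map $f:V(H)\to\{1,\dots,t\}$ (defined on all vertices) such that each preimage $f^{-1}(i)$ induces a connected subgraph of $H$ and for all $i\ne j$ there is at least one edge between $f^{-1}(i)$ and $f^{-1}(j)$; $\eta(H)$ is the largest $t$ for which such a function exists. *)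

theory Defs
  imports Main
begin

text \<open>Simple graphs are given by a finite vertex set V and a symmetric irreflexive
adjacency predicate E.\<close>

definition induced_connected :: "('a \<Rightarrow> 'a \<Rightarrow> bool) \<Rightarrow> 'a set \<Rightarrow> bool" where
  "induced_connected E S \<longleftrightarrow> S \<noteq> {} \<and>
     (\<forall>x\<in>S. \<forall>y\<in>S. (\<lambda>u v. u \<in> S \<and> v \<in> S \<and> E u v)\<^sup>*\<^sup>* x y)"

definition minor_function :: "'a set \<Rightarrow> ('a \<Rightarrow> 'a \<Rightarrow> bool) \<Rightarrow> nat \<Rightarrow> ('a \<Rightarrow> nat) \<Rightarrow> bool" where
  "minor_function V E t f \<longleftrightarrow>
     (\<forall>v\<in>V. f v \<in> {1..t}) \<and>
     (\<forall>i\<in>{1..t}. induced_connected E {v\<in>V. f v = i}) \<and>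
     (\<forall>i\<in>{1..t}. \<forall>j\<in>{1..t}. i \<noteq> j \<longrightarrow>
        (\<exists>u\<in>V. \<exists>v\<in>V. f u = i \<and> f v = j \<and> E u v))"

definition hadwiger :: "'a set \<Rightarrow> ('a \<Rightarrow> 'a \<Rightarrow> bool) \<Rightarrow> nat" where
  "hadwiger V E = Max {t. \<exists>f. minor_function V E t f}"

definition is_clique :: "'a set \<Rightarrow> ('a \<Rightarrow> 'a \<Rightarrow> bool) \<Rightarrow> 'a set \<Rightarrow> bool" where
  "is_clique V E S \<longleftrightarrow> S \<subseteq> V \<and> (\<forall>x\<in>S. \<forall>y\<in>S. x \<noteq> y \<longrightarrow> E x y)"

definition clique_number :: "'a set \<Rightarrow> ('a \<Rightarrow> 'a \<Rightarrow> bool) \<Rightarrow> nat" where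
  "clique_number V E = Max {card S | S. is_clique V E S}"

definition path_adj :: "nat \<Rightarrow> nat \<Rightarrow> nat \<Rightarrow> bool" where
  "path_adj k i j \<longleftrightarrow> i < k \<and> j < k \<and> (j = i + 1 \<or> i = j + 1)"

definition cycle_adj :: "nat \<Rightarrow> nat \<Rightarrow> nat \<Rightarrow> bool" where
  "cycle_adj k i j \<longleftrightarrow> path_adj k i j \<or> (i = 0 \<and> j = k - 1) \<or> (i = k - 1 \<and> j = 0)"

definition compl_adj :: "('a \<Rightarrow> 'a \<Rightarrow> bool) \<Rightarrow> 'a \<Rightarrow> 'a \<Rightarrow> bool" where
  "compl_adj E i j \<longleftrightarrow> i \<noteq> j \<and> \<not> E i j"

end

theory Submission
  imports Defs
begin

lemma minor_intro:
  assumes sym: "\<And>u v. E u v \<Longrightarrow> E v u"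
  and rng: "\<And>v. v \<in> V \<Longrightarrow> f v \<in> {1..h}"
  and cen: "\<And>i. i \<in> {1..h} \<Longrightarrow> \<exists>c\<in>V. f c = i \<and> (\<forall>u\<in>V. f u = i \<longrightarrow> u \<noteq> c \<longrightarrow> E c u)"
  and adj: "\<And>i j. 1 \<le> i \<Longrightarrow> i < j \<Longrightarrow> j \<le> h \<Longrightarrow> \<exists>u\<in>V. \<exists>v\<in>V. f u = i \<and> f v = j \<and> E u v"
  shows "minor_function V E h f"
  unfolding minor_function_def
proof (intro conjI ballI impI)
  fix v assume "v \<in> V" thus "f v \<in> {1..h}" by (rule rng)
next
  fix i assume i: "i \<in> {1..h}"
  obtain c where c: "c \<in> V" "f c = i" "\<forall>u\<in>V. f u = i \<longrightarrow> u \<noteq> c \<longrightarrow> E c u"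
    using cen[OF i] by blast
  let ?S = "{v \<in> V. f v = i}"
  let ?R = "\<lambda>u v. u \<in> ?S \<and> v \<in> ?S \<and> E u v"
  have to: "?R\<^sup>*\<^sup>* c y" if "y \<in> ?S" for y
    using that c by (cases "y = c") auto
  have fr: "?R\<^sup>*\<^sup>* x c" if "x \<in> ?S" for x
    using that c sym by (cases "x = c") (auto intro!: r_into_rtranclp)
  show "induced_connected E ?S"
    unfolding induced_connected_def
    using c to fr by (auto intro: rtranclp_trans)
next
  fix i j assume "i \<in> {1..h}" "j \<in> {1..h}" "i \<noteq> j"
  then consider "i < j" | "j < i" by linarith
  thus "\<exists>u\<in>V. \<exists>v\<in>V. f u = i \<and> f v = j \<and> E u v"
  proof cases
    case 1 thus ?thesis using adj \<open>i \<in> {1..h}\<close> \<open>j \<in> {1..h}\<close> by auto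
  next
    case 2
    have "1 \<le> j" "i \<le> h" using \<open>i \<in> {1..h}\<close> \<open>j \<in> {1..h}\<close> by auto
    from adj[OF this(1) 2 this(2)] obtain u v where "u\<in>V" "v\<in>V" "f u = j" "f v = i" "E u v"
      by blast
    thus ?thesis using sym by blast
  qed
qed

lemma clique_fin: "finite V \<Longrightarrow> finite {card S | S. is_clique V E S}"
proof -
  assume "finite V"
  have "{card S | S. is_clique V E S} \<subseteq> card ` Pow V" by (auto simp: is_clique_def)
  thus ?thesis using \<open>finite V\<close> finite_subset by blast
qed

lemma clique_ge: "finite V \<Longrightarrow> is_clique V E S \<Longrightarrow> card S \<le> clique_number V E"
  unfolding clique_number_def by (rule Max_ge) (auto intro: clique_fin)

lemma clique_le:
  assumes "finite V" "\<And>S. is_clique V E S \<Longrightarrow> card S \<le> B"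
  shows "clique_number V E \<le> B"
proof -
  have "is_clique V E {}" by (simp add: is_clique_def)
  thus ?thesis unfolding clique_number_def using assms clique_fin[OF assms(1)]
    by (subst Max_le_iff) auto
qed

lemma minor_upper:
  assumes fin: "finite V" and mf: "minor_function V E t f"
  shows "2*t \<le> card V + clique_number V E"
proof -
  define C where "C = {v\<in>V. \<forall>u\<in>V. f u = f v \<longrightarrow> u = v}"
  have rng: "\<forall>v\<in>V. f v \<in> {1..t}" using mf by (simp add: minor_function_def)
  have cl: "is_clique V E C"
    unfolding is_clique_def
  proof (intro conjI ballI impI)
    show "C \<subseteq> V" by (auto simp: C_def)
    fix x y assume x: "x \<in> C" and y: "y \<in> C" and "x \<noteq> y"
    hence ne: "f x \<noteq> f y" by (auto simp: C_def)
    have "f x \<in> {1..t}" "f y \<in> {1..t}" using x y rng by (auto simp: C_def)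
    then obtain u v where "u\<in>V" "v\<in>V" "f u = f x" "f v = f y" "E u v"
      using mf ne unfolding minor_function_def by blast
    moreover have "u = x" using x \<open>u\<in>V\<close> \<open>f u = f x\<close> by (auto simp: C_def)
    moreover have "v = y" using y \<open>v\<in>V\<close> \<open>f v = f y\<close> by (auto simp: C_def)
    ultimately show "E x y" by simp
  qed
  have cC: "card C \<le> clique_number V E" by (rule clique_ge[OF fin cl])
  have injC: "inj_on f C" by (auto simp: C_def inj_on_def)
  have fCsub: "f ` C \<subseteq> {1..t}" using rng by (auto simp: C_def)
  hence cCt: "card C \<le> t" using card_mono[OF _ fCsub] card_image[OF injC] by simp
  define I where "I = {1..t} - f ` C"
  define B where "B i = {v\<in>V. f v = i}" for i
  have finI: "finite I" by (simp add: I_def)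
  have cI: "card I = t - card C"
    unfolding I_def using card_Diff_subset[OF _ fCsub] card_image[OF injC]
    by (simp add: finite_subset[OF fCsub])
  have two: "2 \<le> card (B i)" if "i \<in> I" for i
  proof -
    have "i \<in> {1..t}" using that by (simp add: I_def)
    hence "B i \<noteq> {}" using mf unfolding minor_function_def induced_connected_def B_def by blast
    then obtain v where v: "v \<in> B i" by blast
    have "v \<notin> C" using v that by (auto simp: I_def B_def)
    then obtain u where "u \<in> V" "f u = f v" "u \<noteq> v" using v by (auto simp: C_def B_def)
    hence "{u, v} \<subseteq> B i" using v by (auto simp: B_def)
    moreover have "finite (B i)" using fin by (simp add: B_def)
    ultimately have "card {u,v} \<le> card (B i)" by (rule card_mono[rotated])
    thus ?thesis using \<open>u \<noteq> v\<close> by simp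
  qed
  have sub: "(\<Union>i\<in>I. B i) \<subseteq> V - C" by (auto simp: B_def I_def)
  have "(\<Sum>i\<in>I. card (B i)) = card (\<Union>i\<in>I. B i)"
    by (rule card_UN_disjoint[symmetric]) (use finI fin in \<open>auto simp: B_def\<close>)
  also have "\<dots> \<le> card (V - C)" by (rule card_mono) (use fin sub in auto)
  also have "\<dots> = card V - card C" using fin by (simp add: card_Diff_subset finite_subset[of C V] C_def)
  finally have "(\<Sum>i\<in>I. card (B i)) \<le> card V - card C" .
  moreover have "(\<Sum>i\<in>I. 2) \<le> (\<Sum>i\<in>I. card (B i))" by (rule sum_mono) (rule two)
  ultimately have "2 * card I \<le> card V - card C" by simp
  moreover have "card C \<le> card V" using fin by (intro card_mono) (auto simp: C_def)
  ultimately show ?thesis using cI cCt cC by linarith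
qed

lemma indep_bound:
  fixes S :: "nat set"
  assumes "S \<subseteq> {a..<b}" "\<And>i. i \<in> S \<Longrightarrow> Suc i \<notin> S"
  shows "card S \<le> (b - a + 1) div 2"
proof -
  have inj: "inj_on (\<lambda>i. (i - a) div 2) S"
  proof (rule inj_onI)
    fix x y assume x: "x \<in> S" and y: "y \<in> S" and e: "(x - a) div 2 = (y - a) div 2"
    have "x \<ge> a" "y \<ge> a" using x y assms(1) by auto
    have "x - a = 2 * ((x-a) div 2) + (x-a) mod 2" "y - a = 2 * ((y-a) div 2) + (y-a) mod 2"
      by simp_all
    moreover have "(x-a) mod 2 < 2" "(y-a) mod 2 < 2" by simp_all
    ultimately have "x = y \<or> y = Suc x \<or> x = Suc y" using e \<open>x \<ge> a\<close> \<open>y \<ge> a\<close> by linarith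
    thus "x = y" using assms(2) x y by blast
  qed
  have "(\<lambda>i. (i - a) div 2) ` S \<subseteq> {..<(b - a + 1) div 2}"
  proof
    fix z assume "z \<in> (\<lambda>i. (i - a) div 2) ` S"
    then obtain x where "x \<in> S" "z = (x - a) div 2" by blast
    moreover have "a \<le> x" "x < b" using \<open>x \<in> S\<close> assms(1) by auto
    ultimately have "(x - a + 2) div 2 \<le> (b - a + 1) div 2" by (intro div_le_mono) linarith
    moreover have "(x - a + 2) div 2 = (x - a) div 2 + 1" by simp
    ultimately show "z \<in> {..<(b - a + 1) div 2}" using \<open>z = (x - a) div 2\<close> by simp
  qed
  from card_inj_on_le[OF inj this] show ?thesis by simp
qed

lemma path_clique:
  assumes "is_clique {0..<k} (compl_adj (path_adj k)) S"
  shows "card S \<le> (k + 1) div 2"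
proof -
  have "S \<subseteq> {0..<k}" using assms by (simp add: is_clique_def)
  moreover have "Suc i \<notin> S" if "i \<in> S" for i
  proof
    assume "Suc i \<in> S"
    hence "Suc i < k" using \<open>S \<subseteq> {0..<k}\<close> by auto
    moreover have "compl_adj (path_adj k) i (Suc i)"
      using assms that \<open>Suc i \<in> S\<close> unfolding is_clique_def by auto
    ultimately show False by (simp add: compl_adj_def path_adj_def)
  qed
  ultimately show ?thesis using indep_bound[of S 0 k] by simp
qed

lemma cycle_clique:
  assumes "is_clique {0..<k} (compl_adj (cycle_adj k)) S" and "k \<ge> 3"
  shows "card S \<le> k div 2"
proof -
  have Sk: "S \<subseteq> {0..<k}" using assms by (simp add: is_clique_def)
  have nc: "Suc i \<notin> S" if "i \<in> S" for i
  proof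
    assume "Suc i \<in> S"
    hence "Suc i < k" using Sk by auto
    moreover have "compl_adj (cycle_adj k) i (Suc i)"
      using assms that \<open>Suc i \<in> S\<close> unfolding is_clique_def by auto
    ultimately show False by (simp add: compl_adj_def cycle_adj_def path_adj_def)
  qed
  show ?thesis
  proof (cases "k - 1 \<in> S")
    case False
    have "S \<subseteq> {0..<k-1}"
    proof
      fix x assume "x \<in> S"
      hence "x < k" "x \<noteq> k - 1" using Sk False by auto
      thus "x \<in> {0..<k-1}" by simp
    qed
    thus ?thesis using indep_bound[of S 0 "k-1"] nc using assms(2) by simp
  next
    case True
    have "0 \<notin> S"
    proof
      assume "0 \<in> S"
      thus False using True assms unfolding is_clique_def compl_adj_def cycle_adj_def by force
    qed
    have "k - 2 \<notin> S"
    proof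
      assume "k - 2 \<in> S"
      from nc[OF this] have "Suc (k - 2) \<notin> S" .
      moreover have "Suc (k - 2) = k - 1" using assms(2) by simp
      ultimately show False using True by simp
    qed
    have sub: "S - {k-1} \<subseteq> {1..<k-2}"
    proof
      fix x assume "x \<in> S - {k-1}"
      hence "x \<in> S" "x \<noteq> k - 1" by auto
      have "x \<noteq> 0" using \<open>x \<in> S\<close> \<open>0 \<notin> S\<close> by metis
      have "x \<noteq> k - 2" using \<open>x \<in> S\<close> \<open>k - 2 \<notin> S\<close> by metis
      have "x < k" using \<open>x \<in> S\<close> Sk by auto
      note \<open>x \<noteq> 0\<close> \<open>x \<noteq> k - 2\<close> \<open>x < k\<close> \<open>x \<noteq> k - 1\<close>
      thus "x \<in> {1..<k-2}" by simp
    qed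
    have "card (S - {k-1}) \<le> (k - 2 - 1 + 1) div 2"
      by (rule indep_bound[OF sub]) (use nc in auto)
    moreover have "card S = card (S - {k-1}) + 1"
      using True finite_subset[OF Sk] card.remove[of S "k-1"] by simp
    ultimately show ?thesis using assms(2) by linarith
  qed
qed


definition grp :: "nat \<Rightarrow> nat \<Rightarrow> nat" where
  "grp q i = (if i < q then i else if i < 2*q then i - q else 0)"

definition fG :: "nat \<Rightarrow> nat \<Rightarrow> nat \<Rightarrow> nat" where
  "fG L q v = (if v mod 2 = 0 \<and> v div 2 < L then v div 2 + 1 else L + 1 + grp q (v div 2))"

lemma grp_lt: "0 < q \<Longrightarrow> grp q i < q" by (auto simp: grp_def)
lemma grp_id: "g < q \<Longrightarrow> grp q g = g" by (simp add: grp_def)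
lemma grp_sh: "g < q \<Longrightarrow> grp q (g + q) = g" by (simp add: grp_def)

lemma fG_low: "v mod 2 = 0 \<Longrightarrow> v div 2 < L \<Longrightarrow> fG L q v = v div 2 + 1"
  by (simp add: fG_def)
lemma fG_high: "\<not> (v mod 2 = 0 \<and> v div 2 < L) \<Longrightarrow> fG L q v = L + 1 + grp q (v div 2)"
  by (simp add: fG_def)
lemma fG_even: "fG L q (2*a) = a + 1" if "a < L" using that by (simp add: fG_def)
lemma fG_odd: "fG L q (2*n+1) = L + 1 + grp q n" by (simp add: fG_def)
lemma fG_odd': "fG L q (Suc (2*n)) = L + 1 + grp q n" using fG_odd by simp
lemma fG_eq_low: "fG L q v = i \<Longrightarrow> i \<le> L \<Longrightarrow> v = 2*(i-1)"
  by (auto simp: fG_def split: if_splits)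
lemma fG_eq_high: "fG L q v = i \<Longrightarrow> L < i \<Longrightarrow> \<not> (v mod 2 = 0 \<and> v div 2 < L) \<and> grp q (v div 2) = i - L - 1"
  by (auto simp: fG_def split: if_splits)
lemma fG_rng: "0 < q \<Longrightarrow> fG L q v \<in> {1..L+q}"
  using grp_lt[of q "v div 2"] by (auto simp: fG_def)

lemma ca_iff: "compl_adj (cycle_adj k) u v \<longleftrightarrow> u \<noteq> v \<and> \<not>(u<k \<and> v<k \<and> (v = u+1 \<or> u = v+1)) \<and> \<not>(u=0 \<and> v=k-1) \<and> \<not>(u=k-1 \<and> v=0)"
  by (auto simp: compl_adj_def cycle_adj_def path_adj_def)
lemma pa_iff: "compl_adj (path_adj k) u v \<longleftrightarrow> u \<noteq> v \<and> \<not>(u<k \<and> v<k \<and> (v = u+1 \<or> u = v+1))"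
  by (auto simp: compl_adj_def path_adj_def)

lemma CE:
  assumes q: "2*q \<le> m" "m \<le> 2*q+1" "2 \<le> q"
  shows "minor_function {0..<2*m} (compl_adj (cycle_adj (2*m))) (m+q) (fG m q)"
proof (rule minor_intro)
  show "compl_adj (cycle_adj (2*m)) v u" if "compl_adj (cycle_adj (2*m)) u v" for u v
    using that by (auto simp: ca_iff)
  show "fG m q v \<in> {1..m+q}" for v using fG_rng q by simp
next
  fix i assume i: "i \<in> {1..m+q}"
  show "\<exists>c\<in>{0..<2*m}. fG m q c = i \<and> (\<forall>u\<in>{0..<2*m}. fG m q u = i \<longrightarrow> u \<noteq> c \<longrightarrow> compl_adj (cycle_adj (2*m)) c u)"
  proof (cases "i \<le> m")
    case True
    show ?thesis
      apply (rule bexI[of _ "2*(i-1)"])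
      using True i fG_even[of "i-1" m q] fG_eq_low[of m q _ i] by auto
  next
    case False
    define g where "g = i - m - 1"
    have g: "g < q" "i = m + 1 + g" using False i by (auto simp: g_def)
    show ?thesis
    proof (rule bexI[of _ "2*g+1"], intro conjI ballI impI)
      show "fG m q (2*g+1) = i" using g by (simp add: fG_odd fG_odd' grp_id)
      show "2*g+1 \<in> {0..<2*m}" using g q by simp
      fix u assume u: "u \<in> {0..<2*m}" "fG m q u = i" "u \<noteq> 2*g+1"
      have "\<not> (u mod 2 = 0 \<and> u div 2 < m)" using fG_eq_high[OF u(2)] False by simp
      with u show "compl_adj (cycle_adj (2*m)) (2*g+1) u" unfolding ca_iff by auto
    qed
  qed
next
  fix i j assume ij: "1 \<le> i" "i < j" "j \<le> m + q"
  show "\<exists>u\<in>{0..<2*m}. \<exists>v\<in>{0..<2*m}. fG m q u = i \<and> fG m q v = j \<and> compl_adj (cycle_adj (2*m)) u v"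
  proof (cases "j \<le> m")
    case True
    show ?thesis
      apply (rule bexI[of _ "2*(i-1)"], rule bexI[of _ "2*(j-1)"])
      using True ij by (auto simp: fG_even ca_iff)
  next
    case False
    define g where "g = j - m - 1"
    have g: "g < q" "j = m + 1 + g" using False ij by (auto simp: g_def)
    show ?thesis
    proof (cases "i \<le> m")
      case True
      define a where "a = i - 1"
      have a: "a < m" "i = a + 1" using True ij by (auto simp: a_def)
      show ?thesis
      proof (cases "a \<noteq> g \<and> a \<noteq> g + 1")
        case True
        show ?thesis
          apply (rule bexI[of _ "2*a"], rule bexI[of _ "2*g+1"])
          using True a g q by (auto simp: fG_even fG_odd fG_odd' grp_id ca_iff)
      next
        case False
        have w: "fG m q (2*(g+q)+1) = j" using fG_odd[of m q "g+q"] grp_sh[OF g(1)] g by simp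
        show ?thesis
          apply (rule bexI[of _ "2*a"], rule bexI[of _ "2*(g+q)+1"])
          using False a g q w by (auto simp: fG_even ca_iff)
      qed
    next
      case False
      define h where "h = i - m - 1"
      have h: "h < g" "i = m + 1 + h" using False ij g by (auto simp: h_def)
      show ?thesis
        apply (rule bexI[of _ "2*h+1"], rule bexI[of _ "2*g+1"])
        using h g q by (auto simp: fG_odd fG_odd' grp_id ca_iff)
    qed
  qed
qed


lemma CO:
  assumes q: "2*q \<le> m+1" "m \<le> 2*q" "2 \<le> q"
  shows "minor_function {0..<2*m+1} (compl_adj (cycle_adj (2*m+1))) (m+q) (fG m q)"
proof (rule minor_intro)
  show "compl_adj (cycle_adj (2*m+1)) v u" if "compl_adj (cycle_adj (2*m+1)) u v" for u v
    using that by (auto simp: ca_iff)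
  show "fG m q v \<in> {1..m+q}" for v using fG_rng q by simp
next
  fix i assume i: "i \<in> {1..m+q}"
  show "\<exists>c\<in>{0..<2*m+1}. fG m q c = i \<and> (\<forall>u\<in>{0..<2*m+1}. fG m q u = i \<longrightarrow> u \<noteq> c \<longrightarrow> compl_adj (cycle_adj (2*m+1)) c u)"
  proof (cases "i \<le> m")
    case True
    show ?thesis
      apply (rule bexI[of _ "2*(i-1)"])
      using True i fG_even[of "i-1" m q] fG_eq_low[of m q _ i] by auto
  next
    case False
    define g where "g = i - m - 1"
    have g: "g < q" "i = m + 1 + g" using False i by (auto simp: g_def)
    show ?thesis
    proof (rule bexI[of _ "2*g+1"], intro conjI ballI impI)
      show "fG m q (2*g+1) = i" using g by (simp add: fG_odd fG_odd' grp_id)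
      show "2*g+1 \<in> {0..<2*m+1}" using g q by simp
      fix u assume u: "u \<in> {0..<2*m+1}" "fG m q u = i" "u \<noteq> 2*g+1"
      have "\<not> (u mod 2 = 0 \<and> u div 2 < m)" using fG_eq_high[OF u(2)] False by simp
      with u g q show "compl_adj (cycle_adj (2*m+1)) (2*g+1) u" unfolding ca_iff by auto
    qed
  qed
next
  fix i j assume ij: "1 \<le> i" "i < j" "j \<le> m + q"
  show "\<exists>u\<in>{0..<2*m+1}. \<exists>v\<in>{0..<2*m+1}. fG m q u = i \<and> fG m q v = j \<and> compl_adj (cycle_adj (2*m+1)) u v"
  proof (cases "j \<le> m")
    case True
    show ?thesis
      apply (rule bexI[of _ "2*(i-1)"], rule bexI[of _ "2*(j-1)"])
      using True ij by (auto simp: fG_even ca_iff)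
  next
    case False
    define g where "g = j - m - 1"
    have g: "g < q" "j = m + 1 + g" using False ij by (auto simp: g_def)
    show ?thesis
    proof (cases "i \<le> m")
      case True
      define a where "a = i - 1"
      have a: "a < m" "i = a + 1" using True ij by (auto simp: a_def)
      show ?thesis
      proof (cases "a \<noteq> g \<and> a \<noteq> g + 1")
        case True
        show ?thesis
          apply (rule bexI[of _ "2*a"], rule bexI[of _ "2*g+1"])
          using True a g q by (auto simp: fG_even fG_odd fG_odd' grp_id ca_iff)
      next
        case F2: False
        show ?thesis
        proof (cases "g + q < m")
          case True
          have w: "fG m q (2*(g+q)+1) = j" using fG_odd[of m q "g+q"] grp_sh[OF g(1)] g by simp
          show ?thesis
            apply (rule bexI[of _ "2*a"], rule bexI[of _ "2*(g+q)+1"])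
            using F2 True a g q w by (auto simp: fG_even ca_iff)
        next
          case False
          hence gq: "g + q = m" using g q by simp
          have w: "fG m q (2*m) = j" using fG_high[of "2*m" m q] grp_sh[OF g(1)] g gq by simp
          show ?thesis
            apply (rule bexI[of _ "2*a"], rule bexI[of _ "2*m"])
            using F2 gq a g q w by (auto simp: fG_even ca_iff)
        qed
      qed
    next
      case False
      define h where "h = i - m - 1"
      have h: "h < g" "i = m + 1 + h" using False ij g by (auto simp: h_def)
      show ?thesis
        apply (rule bexI[of _ "2*h+1"], rule bexI[of _ "2*g+1"])
        using h g q by (auto simp: fG_odd fG_odd' grp_id ca_iff)
    qed
  qed
qed

lemma PO:
  assumes q: "2*q \<le> m" "m \<le> 2*q+1" "2 \<le> q"
  shows "minor_function {0..<2*m+1} (compl_adj (path_adj (2*m+1))) (m+1+q) (fG (m+1) q)"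
proof (rule minor_intro)
  show "compl_adj (path_adj (2*m+1)) v u" if "compl_adj (path_adj (2*m+1)) u v" for u v
    using that by (auto simp: pa_iff)
  show "fG (m+1) q v \<in> {1..m+1+q}" for v using fG_rng[of q "m+1" v] q by simp
next
  fix i assume i: "i \<in> {1..m+1+q}"
  show "\<exists>c\<in>{0..<2*m+1}. fG (m+1) q c = i \<and> (\<forall>u\<in>{0..<2*m+1}. fG (m+1) q u = i \<longrightarrow> u \<noteq> c \<longrightarrow> compl_adj (path_adj (2*m+1)) c u)"
  proof (cases "i \<le> m+1")
    case True
    show ?thesis
      apply (rule bexI[of _ "2*(i-1)"])
      using True i fG_even[of "i-1" "m+1" q] fG_eq_low[of "m+1" q _ i] by auto
  next
    case False
    define g where "g = i - m - 2"
    have g: "g < q" "i = m + 2 + g" using False i by (auto simp: g_def)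
    show ?thesis
    proof (rule bexI[of _ "2*g+1"], intro conjI ballI impI)
      show "fG (m+1) q (2*g+1) = i" using g by (simp add: fG_odd fG_odd' grp_id)
      show "2*g+1 \<in> {0..<2*m+1}" using g q by simp
      fix u assume u: "u \<in> {0..<2*m+1}" "fG (m+1) q u = i" "u \<noteq> 2*g+1"
      have "\<not> (u mod 2 = 0 \<and> u div 2 < m+1)" using fG_eq_high[OF u(2)] False by simp
      with u g q show "compl_adj (path_adj (2*m+1)) (2*g+1) u" unfolding pa_iff by auto
    qed
  qed
next
  fix i j assume ij: "1 \<le> i" "i < j" "j \<le> m + 1 + q"
  show "\<exists>u\<in>{0..<2*m+1}. \<exists>v\<in>{0..<2*m+1}. fG (m+1) q u = i \<and> fG (m+1) q v = j \<and> compl_adj (path_adj (2*m+1)) u v"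
  proof (cases "j \<le> m+1")
    case True
    show ?thesis
      apply (rule bexI[of _ "2*(i-1)"], rule bexI[of _ "2*(j-1)"])
      using True ij by (auto simp: fG_even pa_iff)
  next
    case False
    define g where "g = j - m - 2"
    have g: "g < q" "j = m + 2 + g" using False ij by (auto simp: g_def)
    show ?thesis
    proof (cases "i \<le> m+1")
      case True
      define a where "a = i - 1"
      have a: "a < m+1" "i = a + 1" using True ij by (auto simp: a_def)
      show ?thesis
      proof (cases "a \<noteq> g \<and> a \<noteq> g + 1")
        case True
        show ?thesis
          apply (rule bexI[of _ "2*a"], rule bexI[of _ "2*g+1"])
          using True a g q by (auto simp: fG_even fG_odd fG_odd' grp_id pa_iff)
      next
        case False
        have w: "fG (m+1) q (2*(g+q)+1) = j" using fG_odd[of "m+1" q "g+q"] grp_sh[OF g(1)] g by simp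
        show ?thesis
          apply (rule bexI[of _ "2*a"], rule bexI[of _ "2*(g+q)+1"])
          using False a g q w by (auto simp: fG_even pa_iff)
      qed
    next
      case False
      define h where "h = i - m - 2"
      have h: "h < g" "i = m + 2 + h" using False ij g by (auto simp: h_def)
      show ?thesis
        apply (rule bexI[of _ "2*h+1"], rule bexI[of _ "2*g+1"])
        using h g q by (auto simp: fG_odd fG_odd' grp_id pa_iff)
    qed
  qed
qed


lemma C6: "minor_function {0..<6} (compl_adj (cycle_adj 6)) 4 (fG 3 1)"
proof (rule minor_intro)
  have V: "{0..<6::nat} = {0,1,2,3,4,5}" by auto
  show "compl_adj (cycle_adj 6) v u" if "compl_adj (cycle_adj 6) u v" for u v
    using that by (auto simp: ca_iff)
  show "fG 3 1 v \<in> {1..4}" for v using fG_rng[of 1 3 v] by simp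
  fix i assume "i \<in> {1..4::nat}"
  hence "i = 1 \<or> i = 2 \<or> i = 3 \<or> i = 4" by auto
  thus "\<exists>c\<in>{0..<6}. fG 3 1 c = i \<and> (\<forall>u\<in>{0..<6}. fG 3 1 u = i \<longrightarrow> u \<noteq> c \<longrightarrow> compl_adj (cycle_adj 6) c u)"
    unfolding V by (elim disjE) (simp_all add: fG_def grp_def ca_iff)
next
  have V: "{0..<6::nat} = {0,1,2,3,4,5}" by auto
  fix i j :: nat assume "1 \<le> i" "i < j" "j \<le> 4"
  hence "(i = 1 \<or> i = 2 \<or> i = 3) \<and> (j = 2 \<or> j = 3 \<or> j = 4) \<and> i < j" by auto
  thus "\<exists>u\<in>{0..<6}. \<exists>v\<in>{0..<6}. fG 3 1 u = i \<and> fG 3 1 v = j \<and> compl_adj (cycle_adj 6) u v"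
    unfolding V by (elim conjE disjE) (simp_all add: fG_def grp_def ca_iff)
qed

lemma P7: "minor_function {0..<7} (compl_adj (path_adj 7)) 5 (fG 4 1)"
proof (rule minor_intro)
  have V: "{0..<7::nat} = {0,1,2,3,4,5,6}" by auto
  show "compl_adj (path_adj 7) v u" if "compl_adj (path_adj 7) u v" for u v
    using that by (auto simp: pa_iff)
  show "fG 4 1 v \<in> {1..5}" for v using fG_rng[of 1 4 v] by simp
  fix i assume "i \<in> {1..5::nat}"
  hence "i = 1 \<or> i = 2 \<or> i = 3 \<or> i = 4 \<or> i = 5" by auto
  thus "\<exists>c\<in>{0..<7}. fG 4 1 c = i \<and> (\<forall>u\<in>{0..<7}. fG 4 1 u = i \<longrightarrow> u \<noteq> c \<longrightarrow> compl_adj (path_adj 7) c u)"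
    unfolding V by (elim disjE) (simp_all add: fG_def grp_def pa_iff)
next
  have V: "{0..<7::nat} = {0,1,2,3,4,5,6}" by auto
  fix i j :: nat assume "1 \<le> i" "i < j" "j \<le> 5"
  hence "(i = 1 \<or> i = 2 \<or> i = 3 \<or> i = 4) \<and> (j = 2 \<or> j = 3 \<or> j = 4 \<or> j = 5) \<and> i < j" by auto
  thus "\<exists>u\<in>{0..<7}. \<exists>v\<in>{0..<7}. fG 4 1 u = i \<and> fG 4 1 v = j \<and> compl_adj (path_adj 7) u v"
    unfolding V by (elim conjE disjE) (simp_all add: fG_def grp_def pa_iff)
qed


lemma minor_mono:
  assumes EE: "\<And>u v. E u v \<Longrightarrow> E' u v" and mf: "minor_function V E h f"
  shows "minor_function V E' h f"
proof -
  have "induced_connected E' S" if "induced_connected E S" for S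
  proof -
    have "(\<lambda>u v. u \<in> S \<and> v \<in> S \<and> E u v)\<^sup>*\<^sup>* x y \<Longrightarrow> (\<lambda>u v. u \<in> S \<and> v \<in> S \<and> E' u v)\<^sup>*\<^sup>* x y" for x y
      by (rule rtranclp_mono[THEN predicate2D, rotated]) (auto simp: EE)
    thus ?thesis using that unfolding induced_connected_def by blast
  qed
  thus ?thesis using mf EE unfolding minor_function_def by meson
qed

lemma hadw_eq:
  assumes fin: "finite V" and mf: "minor_function V E h f"
    and ub: "\<And>t g. minor_function V E t g \<Longrightarrow> t \<le> h"
  shows "hadwiger V E = h"
proof -
  let ?T = "{t. \<exists>f. minor_function V E t f}"
  have sub: "?T \<subseteq> {..h}" using ub by auto
  have finT: "finite ?T" by (rule finite_subset[OF sub]) simp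
  have hT: "h \<in> ?T" using mf by blast
  have "Max ?T \<le> h" using finT hT sub by (subst Max_le_iff) auto
  moreover have "h \<le> Max ?T" by (rule Max_ge[OF finT hT])
  ultimately show ?thesis unfolding hadwiger_def by simp
qed

lemma lowC:
  assumes "k \<ge> 6"
  shows "\<exists>f. minor_function {0..<k} (compl_adj (cycle_adj k)) ((k + k div 2) div 2) f"
proof -
  define m where "m = k div 2"
  show ?thesis
  proof (cases "even k")
    case True
    hence k: "k = 2*m" by (simp add: m_def)
    show ?thesis
    proof (cases "m = 3")
      case True
      thus ?thesis using C6 k by auto
    next
      case False
      hence "m \<ge> 4" using assms k by simp
      hence "minor_function {0..<2*m} (compl_adj (cycle_adj (2*m))) (m + m div 2) (fG m (m div 2))"
        by (intro CE) auto
      moreover have "m + m div 2 = (k + k div 2) div 2" using k by simp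
      ultimately show ?thesis using k by metis
    qed
  next
    case False
    hence k: "k = 2*m+1" by (simp add: m_def)
    hence "m \<ge> 3" using assms by simp
    hence "minor_function {0..<2*m+1} (compl_adj (cycle_adj (2*m+1))) (m + (m+1) div 2) (fG m ((m+1) div 2))"
      by (intro CO) auto
    moreover have "m + (m+1) div 2 = (k + k div 2) div 2" using k by simp
    ultimately show ?thesis using k by metis
  qed
qed

lemma lowP:
  assumes "k \<ge> 6"
  shows "\<exists>f. minor_function {0..<k} (compl_adj (path_adj k)) ((k + (k+1) div 2) div 2) f"
proof -
  define m where "m = k div 2"
  show ?thesis
  proof (cases "even k")
    case True
    obtain f where f: "minor_function {0..<k} (compl_adj (cycle_adj k)) ((k + k div 2) div 2) f"
      using lowC[OF assms] by blast
    have "minor_function {0..<k} (compl_adj (path_adj k)) ((k + k div 2) div 2) f"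
      by (rule minor_mono[OF _ f]) (auto simp: compl_adj_def cycle_adj_def)
    moreover have "(k + k div 2) div 2 = (k + (k+1) div 2) div 2" using True by presburger
    ultimately show ?thesis by metis
  next
    case False
    hence k: "k = 2*m+1" by (simp add: m_def)
    show ?thesis
    proof (cases "m = 3")
      case True
      thus ?thesis using P7 k by auto
    next
      case False
      hence "m \<ge> 4" using assms k by simp
      hence "minor_function {0..<2*m+1} (compl_adj (path_adj (2*m+1))) (m+1 + m div 2) (fG (m+1) (m div 2))"
        by (intro PO) auto
      moreover have "m + 1 + m div 2 = (k + (k+1) div 2) div 2" using k by simp
      ultimately show ?thesis using k by metis
    qed
  qed
qed

lemma half: fixes n a b :: nat assumes "n = 2*a + b" "b < 2" shows "n div 2 = a"
  using assms by simp
lemma ar: fixes k :: nat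
  shows "k mod 4 = 0 \<Longrightarrow> (k + k div 2) div 2 = 3*(k div 4) \<and> (k + (k+1) div 2) div 2 = 3*(k div 4)"
    "k mod 4 = 1 \<Longrightarrow> (k + k div 2) div 2 = 3*(k div 4) \<and> (k + (k+1) div 2) div 2 = 3*(k div 4) + 1"
    "k mod 4 = 2 \<Longrightarrow> (k + k div 2) div 2 = 3*(k div 4) + 1 \<and> (k + (k+1) div 2) div 2 = 3*(k div 4) + 1"
    "k mod 4 = 3 \<Longrightarrow> (k + k div 2) div 2 = 3*(k div 4) + 2 \<and> (k + (k+1) div 2) div 2 = 3*(k div 4) + 2"
proof -
  define t where "t = k div 4"
  have k: "k = 4*t + k mod 4" by (simp add: t_def)
  { assume r: "k mod 4 = 0"
    have a: "k div 2 = 2*t" by (rule half[where b=0]) (use k r in simp_all)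
    have b: "(k+1) div 2 = 2*t" by (rule half[where b=1]) (use k r in simp_all)
    have c: "(k + k div 2) div 2 = 3*t" by (rule half[where b=0]) (use k r a in simp_all)
    have d: "(k + (k+1) div 2) div 2 = 3*t" by (rule half[where b=0]) (use k r b in simp_all)
    note c d }
  note R0 = this
  { assume r: "k mod 4 = 1"
    have a: "k div 2 = 2*t" by (rule half[where b=1]) (use k r in simp_all)
    have b: "(k+1) div 2 = 2*t+1" by (rule half[where b=0]) (use k r in simp_all)
    have c: "(k + k div 2) div 2 = 3*t" by (rule half[where b=1]) (use k r a in simp_all)
    have d: "(k + (k+1) div 2) div 2 = 3*t+1" by (rule half[where b=0]) (use k r b in simp_all)
    note c d }
  note R1 = this
  { assume r: "k mod 4 = 2"
    have a: "k div 2 = 2*t+1" by (rule half[where b=0]) (use k r in simp_all)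
    have b: "(k+1) div 2 = 2*t+1" by (rule half[where b=1]) (use k r in simp_all)
    have c: "(k + k div 2) div 2 = 3*t+1" by (rule half[where b=1]) (use k r a in simp_all)
    have d: "(k + (k+1) div 2) div 2 = 3*t+1" by (rule half[where b=1]) (use k r b in simp_all)
    note c d }
  note R2 = this
  { assume r: "k mod 4 = 3"
    have a: "k div 2 = 2*t+1" by (rule half[where b=1]) (use k r in simp_all)
    have b: "(k+1) div 2 = 2*t+2" by (rule half[where b=0]) (use k r in simp_all)
    have c: "(k + k div 2) div 2 = 3*t+2" by (rule half[where b=0]) (use k r a in simp_all)
    have d: "(k + (k+1) div 2) div 2 = 3*t+2" by (rule half[where b=1]) (use k r b in simp_all)
    note c d }
  note R3 = this
  show "k mod 4 = 0 \<Longrightarrow> (k + k div 2) div 2 = 3*(k div 4) \<and> (k + (k+1) div 2) div 2 = 3*(k div 4)"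
    using R0 t_def by simp
  show "k mod 4 = 1 \<Longrightarrow> (k + k div 2) div 2 = 3*(k div 4) \<and> (k + (k+1) div 2) div 2 = 3*(k div 4) + 1"
    using R1 t_def by simp
  show "k mod 4 = 2 \<Longrightarrow> (k + k div 2) div 2 = 3*(k div 4) + 1 \<and> (k + (k+1) div 2) div 2 = 3*(k div 4) + 1"
    using R2 t_def by simp
  show "k mod 4 = 3 \<Longrightarrow> (k + k div 2) div 2 = 3*(k div 4) + 2 \<and> (k + (k+1) div 2) div 2 = 3*(k div 4) + 2"
    using R3 t_def by simp
qed

theorem lemma9:
  fixes k :: nat
  assumes "k \<ge> 6"
  shows "hadwiger {0..<k} (compl_adj (path_adj k))
           = (k + clique_number {0..<k} (compl_adj (path_adj k))) div 2
       \<and> hadwiger {0..<k} (compl_adj (cycle_adj k))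
           = (k + clique_number {0..<k} (compl_adj (cycle_adj k))) div 2
       \<and> (k mod 4 = 0 \<longrightarrow> hadwiger {0..<k} (compl_adj (cycle_adj k)) = 3 * (k div 4)
           \<and> hadwiger {0..<k} (compl_adj (path_adj k)) = 3 * (k div 4))
       \<and> (k mod 4 = 1 \<longrightarrow> hadwiger {0..<k} (compl_adj (cycle_adj k)) = 3 * (k div 4)
           \<and> hadwiger {0..<k} (compl_adj (path_adj k)) = 3 * (k div 4) + 1)
       \<and> (k mod 4 = 2 \<longrightarrow> hadwiger {0..<k} (compl_adj (cycle_adj k)) = 3 * (k div 4) + 1
           \<and> hadwiger {0..<k} (compl_adj (path_adj k)) = 3 * (k div 4) + 1)
       \<and> (k mod 4 = 3 \<longrightarrow> hadwiger {0..<k} (compl_adj (cycle_adj k)) = 3 * (k div 4) + 2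
           \<and> hadwiger {0..<k} (compl_adj (path_adj k)) = 3 * (k div 4) + 2)"
proof -
  let ?V = "{0..<k}"
  let ?EC = "compl_adj (cycle_adj k)" and ?EP = "compl_adj (path_adj k)"
  define HC where "HC = (k + k div 2) div 2"
  define HP where "HP = (k + (k+1) div 2) div 2"
  have fin: "finite ?V" by simp
  have wC: "clique_number ?V ?EC \<le> k div 2"
    by (rule clique_le[OF fin]) (rule cycle_clique, use assms in auto)
  have wP: "clique_number ?V ?EP \<le> (k + 1) div 2"
    by (rule clique_le[OF fin]) (rule path_clique)
  obtain fc where fc: "minor_function ?V ?EC HC fc" using lowC[OF assms] HC_def by blast
  obtain fp where fp: "minor_function ?V ?EP HP fp" using lowP[OF assms] HP_def by blast
  have hC: "hadwiger ?V ?EC = HC"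
  proof (rule hadw_eq[OF fin fc])
    fix t g assume "minor_function ?V ?EC t g"
    from minor_upper[OF fin this] wC show "t \<le> HC" unfolding HC_def by simp
  qed
  have hP: "hadwiger ?V ?EP = HP"
  proof (rule hadw_eq[OF fin fp])
    fix t g assume "minor_function ?V ?EP t g"
    from minor_upper[OF fin this] wP show "t \<le> HP" unfolding HP_def by simp
  qed
  have eC: "(k + clique_number ?V ?EC) div 2 = HC"
    using minor_upper[OF fin fc] wC unfolding HC_def by simp
  have eP: "(k + clique_number ?V ?EP) div 2 = HP"
    using minor_upper[OF fin fp] wP unfolding HP_def by simp
  show ?thesis unfolding hC hP eC eP HC_def HP_def using ar[of k] by auto
qed

end
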